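(* Let $A$ be a synaptic algebra and let $p,q\in P$ be projections in generic position, i.e. $p\wedge q=p\wedge q^{\perp}=p^{\perp}\wedge q=p^{\perp}\wedge q^{\perp}=0$. Let $c:=(pqp+p^{\perp}q^{\perp}p^{\perp})^{1/2}$ and $s:=(pq^{\perp}p+p^{\perp}qp^{\perp})^{1/2}$, let $u$ be the symmetry of the polar decomposition of $p-q^{\perp}$ and $v$ the symmetry of the polar decomposition of $p-q$, and put $j:=uvp+pvu$. Then \[ q=c^{2}p+csj+s^{2}p^{\perp}, \] where $pqp=c^{2}p=pc^{2}$, $p^{\perp}qp^{\perp}=s^{2}p^{\perp}=p^{\perp}s^{2}$, $pqp^{\perp}+p^{\perp}qp=csj$, $c^{\circ}=s^{\circ}=1$, $j$ is a symmetry exchanging $p$ and $p^{\perp}$ (i.e. $jpj=p^{\perp}$), $cCs$, $cCj$, $sCj$, and $j\in CC(pqp^{\perp}+p^{\perp}qp)$.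
   Context: Synaptic algebra (Foulis): $R$ is a real linear associative algebra with unit $1$, and $A\subseteq R$ is a real linear subspace with $1\in A$. For $a,b\in A$ write $aCb$ iff $ab=ba$; $C(a):=\{b\in A: aCb\}$; $CC(a):=\{b\in A: bCd \text{ for all } d\in C(a)\}$. $A$ is a synaptic algebra with enveloping algebra $R$ iff: (SA1) $A$ is a partially ordered archimedean real linear space with positive cone $A^+$, $1$ is an order unit, and $\|\cdot\|$ is the corresponding order-unit norm; (SA2) $a\in A\Rightarrow a^2\in A^+$; (SA3) $a,b\in A^+\Rightarrow aba\in A^+$; (SA4) if $a\in A$, $b\in A^+$ and $aba=0$ then $ab=ba=0$; (SA5) if $a\in A^+$ there is $b\in A^+\cap CC(a)$ with $b^2=a$; (SA6) for $a\in A$ there is $p\in A$ with $p=p^2$ and, for all $b\in A$, $ab=0\Leftrightarrow pb=0$; (SA7) if $1\le a\in A$ there is $b\in A$ with $ab=ba=1$; (SA8) if $a,b\in A$, $a_1\le a_2\le\cdots$ are pairwise commuting elements of $C(b)$ and $\|a-a_n\|\to0$, then $a\in C(b)$. $A$ is nondegenerate ($1\ne0$). Products are computed in $R$. $P:=\{p\in A:p=p^2\}$ is the orthomodular lattice of projections (order inherited from $A$) with $p^{\perp}:=1-p$, meet $\wedge$, join $\vee$. For $0\le a$, $a^{1/2}$ is the unique positive square root in $A$, $|a|:=(a^2)^{1/2}$. The carrier $a^{\circ}$ of $a$ is the unique projection with $ab=0\Leftrightarrow a^{\circ}b=0$ for all $b\in A$. A symmetry is $u\in A$ with $u^2=1$.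 For $a\in A$, the signum $t$ of $a$ is the partial symmetry with $t^2=a^{\circ}$, $t\in CC(a)$, $a=|a|t=t|a|$; the symmetry of the polar decomposition of $a$ is $t+(a^{\circ})^{\perp}$. *)

theory Defs
  imports Main "HOL.Real_Vector_Spaces" Complex_Main
begin

text \<open>The enveloping algebra R is modelled by a type
 'r of class real_algebra_1 (real linear associative algebra with unit).
 A is a subset of 'r, K is the positive cone A^+ (a subset of A).\<close>

definition sa_le :: "'r::real_algebra_1 set \<Rightarrow> 'r \<Rightarrow> 'r \<Rightarrow> bool" where
  "sa_le K a b \<longleftrightarrow> b - a \<in> K"

definition commutes :: "'r::real_algebra_1 \<Rightarrow> 'r \<Rightarrow> bool" where
  "commutes a b \<longleftrightarrow> a * b = b * a"

definition Cset :: "'r::real_algebra_1 set \<Rightarrow> 'r \<Rightarrow> 'r set" where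
  "Cset A a = {b \<in> A. commutes a b}"

definition CCset :: "'r::real_algebra_1 set \<Rightarrow> 'r \<Rightarrow> 'r set" where
  "CCset A a = {b \<in> A. \<forall>d \<in> Cset A a. commutes b d}"

definition ou_norm :: "'r::real_algebra_1 set \<Rightarrow> 'r \<Rightarrow> real" where
  "ou_norm K a = Inf {l. 0 < l \<and> sa_le K (- of_real l) a \<and> sa_le K a (of_real l)}"

definition synaptic_algebra :: "'r::real_algebra_1 set \<Rightarrow> 'r set \<Rightarrow> bool" where
  "synaptic_algebra A K \<longleftrightarrow>
     \<comment> \<open>A is a real linear subspace of R containing 1\<close>
     0 \<in> A \<and> (\<forall>a\<in>A. \<forall>b\<in>A. a + b \<in> A) \<and> (\<forall>r. \<forall>a\<in>A. r *\<^sub>R a \<in> A) \<and> 1 \<in> A \<and>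
     \<comment> \<open>SA1: partially ordered archimedean real linear space, positive cone K, order unit 1\<close>
     K \<subseteq> A \<and> (\<forall>a\<in>K. \<forall>b\<in>K. a + b \<in> K) \<and> (\<forall>r\<ge>0. \<forall>a\<in>K. r *\<^sub>R a \<in> K) \<and>
     (\<forall>a\<in>K. - a \<in> K \<longrightarrow> a = 0) \<and>
     (\<forall>a\<in>A. \<forall>b\<in>A. (\<forall>n::nat. sa_le K (real n *\<^sub>R a) b) \<longrightarrow> sa_le K a 0) \<and>
     (\<forall>a\<in>A. \<exists>r::real. sa_le K a (r *\<^sub>R 1)) \<and>
     \<comment> \<open>SA2\<close>
     (\<forall>a\<in>A. a * a \<in> K) \<and>
     \<comment> \<open>SA3\<close>
     (\<forall>a\<in>K. \<forall>b\<in>K. a * b * a \<in> K) \<and>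
     \<comment> \<open>SA4\<close>
     (\<forall>a\<in>A. \<forall>b\<in>K. a * b * a = 0 \<longrightarrow> a * b = 0 \<and> b * a = 0) \<and>
     \<comment> \<open>SA5\<close>
     (\<forall>a\<in>K. \<exists>b\<in>K \<inter> CCset A a. b * b = a) \<and>
     \<comment> \<open>SA6\<close>
     (\<forall>a\<in>A. \<exists>p\<in>A. p * p = p \<and> (\<forall>b\<in>A. a * b = 0 \<longleftrightarrow> p * b = 0)) \<and>
     \<comment> \<open>SA7\<close>
     (\<forall>a\<in>A. sa_le K 1 a \<longrightarrow> (\<exists>b\<in>A. a * b = 1 \<and> b * a = 1)) \<and>
     \<comment> \<open>SA8\<close>
     (\<forall>a\<in>A. \<forall>b\<in>A. \<forall>x::nat \<Rightarrow> 'r.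
        (\<forall>n. x n \<in> Cset A b) \<and> (\<forall>n. sa_le K (x n) (x (Suc n))) \<and>
        (\<forall>m n. commutes (x m) (x n)) \<and> ((\<lambda>n. ou_norm K (a - x n)) \<longlonglongrightarrow> 0)
        \<longrightarrow> a \<in> Cset A b) \<and>
     \<comment> \<open>nondegenerate\<close>
     (1::'r) \<noteq> 0"

definition projections :: "'r::real_algebra_1 set \<Rightarrow> 'r set" where
  "projections A = {p \<in> A. p * p = p}"

definition orth :: "'r::real_algebra_1 \<Rightarrow> 'r" where
  "orth p = 1 - p"

definition is_proj_meet :: "'r::real_algebra_1 set \<Rightarrow> 'r set \<Rightarrow> 'r \<Rightarrow> 'r \<Rightarrow> 'r \<Rightarrow> bool" where
  "is_proj_meet A K p q r \<longleftrightarrow> r \<in> projections A \<and> sa_le K r p \<and> sa_le K r q \<and>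
     (\<forall>x\<in>projections A. sa_le K x p \<and> sa_le K x q \<longrightarrow> sa_le K x r)"

definition psqrt :: "'r::real_algebra_1 set \<Rightarrow> 'r \<Rightarrow> 'r" where
  "psqrt K a = (THE b. b \<in> K \<and> b * b = a)"

definition sabs :: "'r::real_algebra_1 set \<Rightarrow> 'r \<Rightarrow> 'r" where
  "sabs K a = psqrt K (a * a)"

definition carrier_of :: "'r::real_algebra_1 set \<Rightarrow> 'r \<Rightarrow> 'r" where
  "carrier_of A a = (THE p. p \<in> projections A \<and> (\<forall>b\<in>A. a * b = 0 \<longleftrightarrow> p * b = 0))"

definition signum :: "'r::real_algebra_1 set \<Rightarrow> 'r set \<Rightarrow> 'r \<Rightarrow> 'r" where
  "signum A K a = (THE t. t \<in> A \<and> t * t = carrier_of A a \<and> t \<in> CCset A a \<and>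
                        a = sabs K a * t \<and> a = t * sabs K a)"

definition polar_symmetry :: "'r::real_algebra_1 set \<Rightarrow> 'r set \<Rightarrow> 'r \<Rightarrow> 'r" where
  "polar_symmetry A K a = signum A K a + orth (carrier_of A a)"

end

theory Submission imports Defs begin

locale SAlg = fixes A K :: "'r::real_algebra_1 set" assumes SA: "synaptic_algebra A K"
begin

lemma facts1: "0 \<in> A" using SA unfolding synaptic_algebra_def by (elim conjE) assumption
lemma facts2: "(\<forall>a\<in>A. \<forall>b\<in>A. a + b \<in> A)" using SA unfolding synaptic_algebra_def by (elim conjE) assumption
lemma facts3: "(\<forall>r. \<forall>a\<in>A. r *\<^sub>R a \<in> A)" using SA unfolding synaptic_algebra_def by (elim conjE) assumption
lemma facts4: "1 \<in> A" using SA unfolding synaptic_algebra_def by (elim conjE) assumption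
lemma facts5: "K \<subseteq> A" using SA unfolding synaptic_algebra_def by (elim conjE) assumption
lemma facts6: "(\<forall>a\<in>K. \<forall>b\<in>K. a + b \<in> K)" using SA unfolding synaptic_algebra_def by (elim conjE) assumption
lemma facts7: "(\<forall>a\<in>K. - a \<in> K \<longrightarrow> a = 0)" using SA unfolding synaptic_algebra_def by (elim conjE) assumption
lemma facts8: "(\<forall>a\<in>A. a * a \<in> K)" using SA unfolding synaptic_algebra_def by (elim conjE) assumption
lemma facts9: "(\<forall>a\<in>K. \<forall>b\<in>K. a * b * a \<in> K)" using SA unfolding synaptic_algebra_def by (elim conjE) assumption
lemma facts10: "(\<forall>a\<in>A. \<forall>b\<in>K. a * b * a = 0 \<longrightarrow> a * b = 0 \<and> b * a = 0)" using SA unfolding synaptic_algebra_def by (elim conjE) assumption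
lemma facts11: "(\<forall>a\<in>K. \<exists>b\<in>K \<inter> CCset A a. b * b = a)" using SA unfolding synaptic_algebra_def by (elim conjE) assumption
lemma facts12: "(\<forall>a\<in>A. \<exists>p\<in>A. p * p = p \<and> (\<forall>b\<in>A. a * b = 0 \<longleftrightarrow> p * b = 0))" using SA unfolding synaptic_algebra_def by (elim conjE) assumption

lemma zeroA: "0 \<in> A" using facts1 .
lemma addA: "a \<in> A \<Longrightarrow> b \<in> A \<Longrightarrow> a + b \<in> A" using facts2 by blast
lemma scaleA: "a \<in> A \<Longrightarrow> r *\<^sub>R a \<in> A" using facts3 by blast
lemma oneA: "1 \<in> A" using facts4 .
lemma KA: "a \<in> K \<Longrightarrow> a \<in> A" using facts5 by blast
lemma Kadd: "a \<in> K \<Longrightarrow> b \<in> K \<Longrightarrow> a + b \<in> K" using facts6 by blast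
lemma Kpt: "a \<in> K \<Longrightarrow> - a \<in> K \<Longrightarrow> a = 0" using facts7 by blast
lemma sqK: "a \<in> A \<Longrightarrow> a * a \<in> K" using facts8 by blast
lemma SA3: "a \<in> K \<Longrightarrow> b \<in> K \<Longrightarrow> a * b * a \<in> K" using facts9 by blast
lemma SA4: "a \<in> A \<Longrightarrow> b \<in> K \<Longrightarrow> a * b * a = 0 \<Longrightarrow> a * b = 0" using facts10 by blast
lemma SA5: "a \<in> K \<Longrightarrow> \<exists>b\<in>K \<inter> CCset A a. b * b = a" using facts11 by blast
lemma SA6: "a \<in> A \<Longrightarrow> \<exists>p\<in>A. p * p = p \<and> (\<forall>b\<in>A. a * b = 0 \<longleftrightarrow> p * b = 0)" using facts12 by blast

lemma negA: "a \<in> A \<Longrightarrow> - a \<in> A" using scaleA[of a "-1"] by simp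
lemma diffA: "a \<in> A \<Longrightarrow> b \<in> A \<Longrightarrow> a - b \<in> A" using addA negA by (metis diff_conv_add_uminus)
lemma halfA: "x + x \<in> A \<Longrightarrow> x \<in> A"
proof -
  assume "x + x \<in> A"
  then have "(1/2::real) *\<^sub>R (x + x) \<in> A" by (rule scaleA)
  moreover have "(1/2::real) *\<^sub>R (x + x) = x" by (simp add: scaleR_2[symmetric])
  ultimately show ?thesis by simp
qed
lemma halfeq: "(x::'r) + x = y + y \<Longrightarrow> x = y"
  by (metis scaleR_2 scaleR_cancel_left zero_neq_numeral)
lemma sqA: "a \<in> A \<Longrightarrow> a * a \<in> A" using sqK KA by blast
lemma jordA: "a \<in> A \<Longrightarrow> b \<in> A \<Longrightarrow> a * b + b * a \<in> A"
proof -
  assume a: "a \<in> A" and b: "b \<in> A"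
  have "(a+b)*(a+b) - a*a - b*b \<in> A" using a b by (intro diffA sqA addA)
  moreover have "(a+b)*(a+b) - a*a - b*b = a * b + b * a" by (simp add: algebra_simps)
  ultimately show ?thesis by simp
qed
lemma tripA: "a \<in> A \<Longrightarrow> b \<in> A \<Longrightarrow> a * b * a \<in> A"
proof -
  assume a: "a \<in> A" and b: "b \<in> A"
  have "a * (a*b+b*a) + (a*b+b*a)*a - ((a*a)*b + b*(a*a)) \<in> A"
    using a b by (intro diffA jordA sqA)
  moreover have "a * (a*b+b*a) + (a*b+b*a)*a - ((a*a)*b + b*(a*a)) = a*b*a + a*b*a"
    by (simp add: algebra_simps)
  ultimately have "a*b*a + a*b*a \<in> A" by simp
  then show ?thesis by (rule halfA)
qed
lemma commA: "a \<in> A \<Longrightarrow> b \<in> A \<Longrightarrow> a * b = b * a \<Longrightarrow> a * b \<in> A"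
proof -
  assume "a \<in> A" "b \<in> A" "a * b = b * a"
  then have "a * b + a * b \<in> A" using jordA[of a b] by simp
  then show ?thesis by (rule halfA)
qed
lemma oneK: "1 \<in> K" using sqK[OF oneA] by simp
lemma nilp: "x \<in> A \<Longrightarrow> x * x = 0 \<Longrightarrow> x = 0"
  using SA4[of x 1] oneK by simp


lemma idem2: "(e::'r) * e = e \<Longrightarrow> e * (e * x) = e * x" by (metis mult.assoc)

lemma carrier_wit:
  assumes a: "a \<in> A" and e: "e \<in> A" "e*e = e" and ker: "\<forall>b\<in>A. a*b = 0 \<longleftrightarrow> e*b = 0"
  shows "a*(1-e) = 0" and "\<forall>d\<in>A. a*d = d*a \<longrightarrow> e*d = d*e" and "(1-e)*a = 0" and "a*e = a" and "e*a = a"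
proof -
  have ee: "e*(e*x) = e*x" for x using idem2 e(2) by blast
  have e1: "e*(1-e) = 0" using e by (simp add: algebra_simps)
  have oe: "1 - e \<in> A" using e oneA by (intro diffA)
  show ae: "a*(1-e) = 0" using ker oe e1 by blast
  have cc: "e*d = d*e" if d: "d\<in>A" "a*d = d*a" for d
  proof -
    have bA: "d*(1-e) + (1-e)*d \<in> A" using d oe by (intro jordA)
    have "a*(d*(1-e) + (1-e)*d) = (a*d)*(1-e) + (a*(1-e))*d" by (simp add: algebra_simps)
    also have "\<dots> = d*(a*(1-e))" using d ae by (simp add: mult.assoc)
    finally have "a*(d*(1-e) + (1-e)*d) = 0" using ae by simp
    hence "e*(d*(1-e) + (1-e)*d) = 0" using ker bA by blast
    moreover have "e*(d*(1-e) + (1-e)*d) = e*d - e*d*e" by (simp add: algebra_simps ee)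
    ultimately have X: "e*d*e = e*d" by simp
    have zA: "(e*d + d*e) - (e*d*e + e*d*e) \<in> A" using d e by (intro diffA addA jordA tripA)
    have zeq: "(e*d + d*e) - (e*d*e + e*d*e) = d*e - e*d*e" using X by simp
    have "(d*e - e*d*e)*(d*e - e*d*e) = 0" by (simp add: algebra_simps ee)
    hence "d*e - e*d*e = 0" using nilp zA zeq by metis
    thus ?thesis using X by simp
  qed
  thus "\<forall>d\<in>A. a*d = d*a \<longrightarrow> e*d = d*e" by blast
  have "e*a = a*e" using cc a by blast
  thus "(1-e)*a = 0" using ae by (simp add: algebra_simps)
  show ae2: "a*e = a" using ae by (simp add: algebra_simps)
  thus "e*a = a" using \<open>e*a = a*e\<close> by simp
qed


lemma sqrt_ex: "a \<in> K \<Longrightarrow> \<exists>b\<in>K. b*b = a \<and> (\<forall>d\<in>A. a*d = d*a \<longrightarrow> b*d = d*b)"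
proof -
  assume "a \<in> K"
  then obtain b where b: "b \<in> K" "b \<in> CCset A a" "b*b = a" using SA5 by blast
  have "\<forall>d\<in>A. a*d = d*a \<longrightarrow> b*d = d*b"
    using b(2) unfolding CCset_def Cset_def commutes_def by auto
  thus ?thesis using b by blast
qed

lemma pos_conj: assumes y: "y \<in> K" and x: "x \<in> A" and xy: "x*y = y*x" shows "x*y*x \<in> K"
proof -
  obtain h where h: "h \<in> K" "h*h = y" "\<forall>d\<in>A. y*d = d*y \<longrightarrow> h*d = d*h" using sqrt_ex y by blast
  have hx: "h*x = x*h" using h(3) x xy by simp
  have "x*y*x = (x*h)*(h*x)" unfolding h(2)[symmetric] by (simp add: mult.assoc)
  also have "\<dots> = (h*x)*(x*h)" using hx by simp
  also have "\<dots> = h*(x*x)*h" by (simp add: mult.assoc)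
  finally have "x*y*x = h*(x*x)*h" .
  moreover have "h*(x*x)*h \<in> K" using SA3 h(1) sqK x by blast
  ultimately show ?thesis by simp
qed

lemma pos_prod: assumes c: "c \<in> K" and s: "s \<in> K" and cs: "c*s = s*c" shows "c*s \<in> K"
proof -
  obtain h where h: "h \<in> K" "h*h = c" "\<forall>d\<in>A. c*d = d*c \<longrightarrow> h*d = d*h" using sqrt_ex c by blast
  have hs: "h*s = s*h" using h(3) KA[OF s] cs by simp
  have "c*s = h*(h*s)" unfolding h(2)[symmetric] by (simp add: mult.assoc)
  also have "\<dots> = h*(s*h)" using hs by simp
  also have "\<dots> = h*s*h" by (simp add: mult.assoc)
  finally have "c*s = h*s*h" .
  moreover have "h*s*h \<in> K" using SA3 h(1) s by blast
  ultimately show ?thesis by simp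
qed

lemma sqrt_is: assumes b: "b \<in> K" and r: "r \<in> K" "r*r = b*b" and rc: "\<forall>d\<in>A. (b*b)*d = d*(b*b) \<longrightarrow> r*d = d*r"
  shows "b = r"
proof -
  have bA: "b \<in> A" and rA: "r \<in> A" using KA b r by auto
  have "(b*b)*b = b*(b*b)" by (simp add: mult.assoc)
  hence rb: "r*b = b*r" using rc bA by blast
  define x where "x = r - b"
  have xA: "x \<in> A" unfolding x_def using rA bA by (rule diffA)
  have xr: "x*r = r*x" unfolding x_def using rb by (simp add: algebra_simps)
  have xb: "x*b = b*x" unfolding x_def using rb by (simp add: algebra_simps)
  have k1: "x*r*x \<in> K" using pos_conj r(1) xA xr by blast
  have k2: "x*b*x \<in> K" using pos_conj b xA xb by blast
  have "x*(r+b) = 0" unfolding x_def using rb r(2) by (simp add: algebra_simps)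
  hence "(x*r + x*b)*x = 0" by (simp add: distrib_left)
  hence "x*r*x + x*b*x = 0" by (simp add: distrib_right)
  hence "- (x*r*x) = x*b*x" by (simp add: add_eq_0_iff)
  hence z1: "x*r*x = 0" using Kpt[OF k1] k2 by simp
  hence z2: "x*b*x = 0" using \<open>x*r*x + x*b*x = 0\<close> by simp
  have "x*r = 0" using SA4 xA r(1) z1 by blast
  moreover have "x*b = 0" using SA4 xA b z2 by blast
  ultimately have "x*(r-b) = 0" by (simp add: right_diff_distrib)
  hence "x*x = 0" unfolding x_def .
  hence "x = 0" using nilp xA by blast
  thus ?thesis unfolding x_def by simp
qed

lemma psqrt_props: assumes a: "a \<in> K"
  shows "psqrt K a \<in> K" "psqrt K a * psqrt K a = a" "\<forall>d\<in>A. a*d = d*a \<longrightarrow> psqrt K a * d = d * psqrt K a"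
proof -
  obtain r where r: "r \<in> K" "r*r = a" "\<forall>d\<in>A. a*d = d*a \<longrightarrow> r*d = d*r" using sqrt_ex a by blast
  have "psqrt K a = r" unfolding psqrt_def
  proof (rule the_equality)
    show "r \<in> K \<and> r * r = a" using r by blast
    fix b assume "b \<in> K \<and> b * b = a"
    hence f: "b \<in> K" "r*r = b*b" "\<forall>d\<in>A. (b*b)*d = d*(b*b) \<longrightarrow> r*d = d*r" using r by auto
    show "b = r" by (rule sqrt_is[OF f(1) r(1) f(2) f(3)])
  qed
  thus "psqrt K a \<in> K" "psqrt K a * psqrt K a = a" "\<forall>d\<in>A. a*d = d*a \<longrightarrow> psqrt K a * d = d * psqrt K a"
    using r by auto
qed

lemma psqrt_eq: "b \<in> K \<Longrightarrow> psqrt K (b*b) = b"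
proof -
  assume b: "b \<in> K"
  have bb: "b*b \<in> K" using sqK KA b by blast
  note P = psqrt_props[OF bb]
  show ?thesis using sqrt_is[OF b P(1) P(2) P(3)] by simp
qed


lemma sabs_props: assumes a: "a \<in> A"
  shows "sabs K a \<in> K" "sabs K a * sabs K a = a * a" "\<forall>d\<in>A. a*d = d*a \<longrightarrow> sabs K a * d = d * sabs K a"
proof -
  have aa: "a*a \<in> K" using sqK a by blast
  note P = psqrt_props[OF aa, folded sabs_def]
  show "sabs K a \<in> K" "sabs K a * sabs K a = a * a" using P by auto
  show "\<forall>d\<in>A. a*d = d*a \<longrightarrow> sabs K a * d = d * sabs K a"
  proof (intro ballI impI)
    fix d assume d: "d \<in> A" "a*d = d*a"
    have "(a*a)*d = a*(d*a)" using d(2) by (simp add: mult.assoc)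
    also have "\<dots> = d*(a*a)" using d(2) by (simp add: mult.assoc[symmetric])
    finally have "(a*a)*d = d*(a*a)" .
    thus "sabs K a * d = d * sabs K a" using P(3) d(1) by blast
  qed
qed

lemma sig_ex: assumes a: "a \<in> A"
  shows "\<exists>t\<in>A. (\<forall>d\<in>A. a*d = d*a \<longrightarrow> t*d = d*t) \<and> sabs K a * t = a \<and> t * sabs K a = a \<and> a*(1 - t*t) = 0"
proof -
  define r where "r = sabs K a"
  note R = sabs_props[OF a, folded r_def]
  have rA: "r \<in> A" using R(1) KA by blast
  have ra: "r*a = a*r" using R(3)[rule_format, OF a] by simp
  define ap where "ap = r + a"
  define am where "am = r - a"
  have apA: "ap \<in> A" unfolding ap_def using rA a by (rule addA)
  have amA: "am \<in> A" unfolding am_def using rA a by (rule diffA)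
  have "ap*am = r*r - r*a + a*r - a*a" unfolding ap_def am_def by (simp add: algebra_simps)
  hence apam: "ap*am = 0" using ra R(2) by simp
  have "am*ap = r*r + r*a - a*r - a*a" unfolding ap_def am_def by (simp add: algebra_simps)
  hence amap: "am*ap = 0" using ra R(2) by simp
  have apamc: "ap*am = am*ap" using apam amap by simp
  obtain e1 where e1A: "e1 \<in> A" and e1r: "e1*e1 = e1 \<and> (\<forall>b\<in>A. ap*b = 0 \<longleftrightarrow> e1*b = 0)" using SA6[OF apA] by (rule bexE)
  note e1 = e1A conjunct1[OF e1r] conjunct2[OF e1r]
  obtain e2 where e2A: "e2 \<in> A" and e2r: "e2*e2 = e2 \<and> (\<forall>b\<in>A. am*b = 0 \<longleftrightarrow> e2*b = 0)" using SA6[OF amA] by (rule bexE)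
  note e2 = e2A conjunct1[OF e2r] conjunct2[OF e2r]
  note C1 = carrier_wit[OF apA e1]
  note C2 = carrier_wit[OF amA e2]
  have e1am: "e1*am = 0" using e1(3)[rule_format, OF amA] apam by simp
  have e2ap: "e2*ap = 0" using e2(3)[rule_format, OF apA] amap by simp
  have "e1*am = am*e1" using C1(2)[rule_format, OF amA] apamc by simp
  hence ame1: "am*e1 = 0" using e1am by simp
  have "e2*ap = ap*e2" using C2(2)[rule_format, OF apA] apamc by simp
  hence ape2: "ap*e2 = 0" using e2ap by simp
  have e1e2: "e1*e2 = 0" using e1(3)[rule_format, OF e2(1)] ape2 by simp
  have e2e1: "e2*e1 = 0" using e2(3)[rule_format, OF e1(1)] ame1 by simp
  define t where "t = e1 - e2"
  have tA: "t \<in> A" unfolding t_def using e1(1) e2(1) by (rule diffA)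
  have rr: "r + r = ap + am" unfolding ap_def am_def by simp
  have aa: "a + a = ap - am" unfolding ap_def am_def by simp
  have "(ap + am)*t = ap - am" unfolding t_def
    using C1(4) C2(4) ame1 ape2 by (simp add: algebra_simps)
  hence "(r+r)*t = a + a" using rr aa by simp
  hence "r*t + r*t = a + a" by (simp add: distrib_right)
  hence rt: "r*t = a" by (rule halfeq)
  have "t*(ap + am) = ap - am" unfolding t_def
    using C1(5) C2(5) e1am e2ap by (simp add: algebra_simps)
  hence "t*(r+r) = a + a" using rr aa by simp
  hence "t*r + t*r = a + a" by (simp add: distrib_left)
  hence tr: "t*r = a" by (rule halfeq)
  have tt: "t*t = e1 + e2" unfolding t_def using e1(2) e2(2) e1e2 e2e1 by (simp add: algebra_simps)
  have "(ap - am)*(1 - t*t) = 0" unfolding tt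
    using C1(4) C2(4) ame1 ape2 by (simp add: algebra_simps)
  hence "(a+a)*(1-t*t) = 0" using aa by simp
  hence "a*(1-t*t) + a*(1-t*t) = 0 + 0" by (simp add: distrib_right)
  hence at: "a*(1-t*t) = 0" by (rule halfeq)
  have cc: "t*d = d*t" if d: "d \<in> A" "a*d = d*a" for d
  proof -
    have rd: "r*d = d*r" using R(3)[rule_format, OF d(1) d(2)] .
    have "ap*d = d*ap" unfolding ap_def using rd d(2) by (simp add: algebra_simps)
    hence "e1*d = d*e1" using C1(2)[rule_format, OF d(1)] by simp
    moreover have "am*d = d*am" unfolding am_def using rd d(2) by (simp add: algebra_simps)
    hence "e2*d = d*e2" using C2(2)[rule_format, OF d(1)] by simp
    ultimately show ?thesis unfolding t_def by (simp add: algebra_simps)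
  qed
  show ?thesis using tA cc rt tr at unfolding r_def by blast
qed


definition "trivker a \<longleftrightarrow> (\<forall>b\<in>A. a*b = 0 \<longrightarrow> b = 0)"

lemma proj_K: "x \<in> A \<Longrightarrow> x*x = x \<Longrightarrow> x \<in> K" using sqK by metis

lemma le_proj: "x \<in> A \<Longrightarrow> y \<in> A \<Longrightarrow> x*x = x \<Longrightarrow> y*y = y \<Longrightarrow> x*y = y \<Longrightarrow> y*x = y \<Longrightarrow> sa_le K y x"
proof -
  assume h: "x \<in> A" "y \<in> A" "x*x = x" "y*y = y" "x*y = y" "y*x = y"
  have "(x-y)*(x-y) = x - y" using h(3-6) by (simp add: algebra_simps)
  moreover have "x - y \<in> A" using h(1,2) by (rule diffA)
  ultimately show ?thesis unfolding sa_le_def using proj_K by blast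
qed

lemma meet0: assumes m: "is_proj_meet A K x y 0" and r: "r \<in> A" "r*r = r" and rx: "sa_le K r x" and ry: "sa_le K r y"
  shows "r = 0"
proof -
  have "r \<in> projections A" unfolding projections_def using r by blast
  hence "sa_le K r 0" using m rx ry unfolding is_proj_meet_def by blast
  hence "- r \<in> K" unfolding sa_le_def by simp
  thus ?thesis using Kpt proj_K r by blast
qed

lemma trivker_sq: assumes a: "a \<in> A" and tk: "trivker a" shows "trivker (a*a)"
proof -
  have aaA: "a*a \<in> A" using sqA a by blast
  obtain e where eA: "e \<in> A" and er: "e*e = e \<and> (\<forall>b\<in>A. (a*a)*b = 0 \<longleftrightarrow> e*b = 0)" using SA6[OF aaA] by (rule bexE)
  note e = eA conjunct1[OF er] conjunct2[OF er]
  note C = carrier_wit[OF aaA e]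
  define f where "f = 1 - e"
  have fA: "f \<in> A" unfolding f_def using oneA e(1) by (rule diffA)
  have ff: "f*f = f" unfolding f_def using e(2) by (simp add: algebra_simps)
  have "(a*a)*a = a*(a*a)" by (simp add: mult.assoc)
  hence "e*a = a*e" using C(2)[rule_format, OF a] by simp
  hence fa: "f*a = a*f" unfolding f_def by (simp add: algebra_simps)
  have afA: "a*f \<in> A" using a fA fa[symmetric] by (rule commA)
  have aaf: "a*a*f = 0" using C(1) unfolding f_def .
  have "(a*f)*(a*f) = a*(f*a)*f" by (simp add: mult.assoc)
  also have "\<dots> = a*a*(f*f)" using fa by (simp add: mult.assoc)
  also have "\<dots> = 0" using ff aaf by simp
  finally have "a*f = 0" using nilp afA by blast
  hence f0: "f = 0" using tk fA unfolding trivker_def by blast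
  hence e1: "e = 1" unfolding f_def by simp
  show ?thesis unfolding trivker_def using e(3) e1 by simp
qed

lemma carrier_one: assumes a: "a \<in> A" and tk: "trivker a" shows "carrier_of A a = 1"
  unfolding carrier_of_def
proof (rule the_equality)
  show "1 \<in> projections A \<and> (\<forall>b\<in>A. a * b = 0 \<longleftrightarrow> 1 * b = 0)"
    using oneA tk unfolding projections_def trivker_def by auto
  fix p assume p: "p \<in> projections A \<and> (\<forall>b\<in>A. a * b = 0 \<longleftrightarrow> p * b = 0)"
  hence pA: "p \<in> A" and pp: "p*p = p" unfolding projections_def by auto
  have oA: "1 - p \<in> A" using oneA pA by (rule diffA)
  have "p*(1-p) = 0" using pp by (simp add: algebra_simps)
  hence "a*(1-p) = 0" using p oA by blast
  hence "1 - p = 0" using tk oA unfolding trivker_def by blast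
  thus "p = 1" by simp
qed

lemma signum_props: assumes a: "a \<in> A" and tk: "trivker a"
  shows "signum A K a \<in> A" "signum A K a * signum A K a = 1"
    "\<forall>d\<in>A. a*d = d*a \<longrightarrow> signum A K a * d = d * signum A K a"
    "sabs K a * signum A K a = a" "signum A K a * sabs K a = a"
    "polar_symmetry A K a = signum A K a"
proof -
  obtain t0 where t0A: "t0 \<in> A" and t0r: "(\<forall>d\<in>A. a*d = d*a \<longrightarrow> t0*d = d*t0) \<and> sabs K a * t0 = a \<and> t0 * sabs K a = a \<and> a*(1 - t0*t0) = 0"
    using sig_ex[OF a] by (rule bexE)
  note T = t0A conjunct1[OF t0r] conjunct1[OF conjunct2[OF t0r]] conjunct1[OF conjunct2[OF conjunct2[OF t0r]]] conjunct2[OF conjunct2[OF conjunct2[OF t0r]]]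
  have c1: "carrier_of A a = 1" by (rule carrier_one[OF a tk])
  have "1 - t0*t0 \<in> A" using oneA sqA[OF T(1)] by (rule diffA)
  hence tt: "t0*t0 = 1" using T(5) tk unfolding trivker_def by auto
  have cc: "t0 \<in> CCset A a" unfolding CCset_def Cset_def commutes_def using T(1,2) by auto
  have "signum A K a = t0" unfolding signum_def
  proof (rule the_equality)
    show "t0 \<in> A \<and> t0 * t0 = carrier_of A a \<and> t0 \<in> CCset A a \<and> a = sabs K a * t0 \<and> a = t0 * sabs K a"
      using T tt c1 cc by auto
    fix t assume t: "t \<in> A \<and> t * t = carrier_of A a \<and> t \<in> CCset A a \<and> a = sabs K a * t \<and> a = t * sabs K a"
    have ta: "t * sabs K a = a" and at: "sabs K a * t = a" using t by auto
    have "(t*sabs K a)*(t - t0) = t*(sabs K a * t - sabs K a * t0)" by (simp add: algebra_simps)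
    also have "\<dots> = 0" using at T(3) by simp
    finally have "a*(t - t0) = 0" unfolding ta .
    moreover have "t - t0 \<in> A" using t T(1) diffA by blast
    ultimately show "t = t0" using tk unfolding trivker_def by auto
  qed
  thus "signum A K a \<in> A" "signum A K a * signum A K a = 1"
    "\<forall>d\<in>A. a*d = d*a \<longrightarrow> signum A K a * d = d * signum A K a"
    "sabs K a * signum A K a = a" "signum A K a * sabs K a = a"
    using T tt by auto
  show "polar_symmetry A K a = signum A K a" unfolding polar_symmetry_def c1 orth_def by simp
qed


lemma generic_trivker:
  assumes pA: "p \<in> A" and pp: "p*p = p" and qA: "q \<in> A" and qq: "q*q = q"
    and m1: "is_proj_meet A K p q 0" and m2: "is_proj_meet A K (1-p) (1-q) 0"
  shows "trivker (p - q)"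
proof -
  define a where "a = p - q"
  have aA: "a \<in> A" unfolding a_def using pA qA by (rule diffA)
  obtain e where eA: "e \<in> A" and er: "e*e = e \<and> (\<forall>b\<in>A. a*b = 0 \<longleftrightarrow> e*b = 0)" using SA6[OF aA] by (rule bexE)
  note e = eA conjunct1[OF er] conjunct2[OF er]
  note C = carrier_wit[OF aA e]
  define f where "f = 1 - e"
  have fA: "f \<in> A" unfolding f_def using oneA e(1) by (rule diffA)
  have ff: "f*f = f" unfolding f_def using e(2) by (simp add: algebra_simps)
  have ffx: "f*(f*x) = f*x" for x using ff by (metis mult.assoc)
  have ppx: "p*(p*x) = p*x" for x using pp by (metis mult.assoc)
  have qqx: "q*(q*x) = q*x" for x using qq by (metis mult.assoc)
  have af: "a*f = 0" using C(1) unfolding f_def .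
  have fa: "f*a = 0" using C(3) unfolding f_def .
  have pf: "p*f = q*f" using af unfolding a_def by (simp add: algebra_simps)
  have fp: "f*p = f*q" using fa unfolding a_def by (simp add: algebra_simps)
  have qpf: "q*(p*f) = p*f" using pf qqx by simp
  have jA: "p*f + f*p \<in> A" using pA fA by (rule jordA)
  have "a*(p*f + f*p) = (p*(p*f) - q*(p*f)) + (a*f)*p" unfolding a_def by (simp add: algebra_simps)
  also have "\<dots> = 0" using ppx qpf af by simp
  finally have "e*(p*f + f*p) = 0" using e(3) jA by blast
  hence "(1-f)*(p*f + f*p) = 0" unfolding f_def by simp
  hence X: "f*(p*f) = p*f" using ffx by (simp add: algebra_simps)
  have zA: "(p*f + f*p) - (f*p*f + f*p*f) \<in> A" using pA fA by (intro diffA addA jordA tripA)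
  have zeq: "(p*f + f*p) - (f*p*f + f*p*f) = f*p - f*p*f" using X by (simp add: algebra_simps)
  have "(f*p - f*p*f)*(f*p - f*p*f) = 0" using ffx by (simp add: algebra_simps)
  hence "f*p - f*p*f = 0" using nilp zA zeq by metis
  hence fpc: "f*p = p*f" using X by (simp add: mult.assoc)
  define r where "r = p*f"
  have rA: "r \<in> A" unfolding r_def using pA fA fpc[symmetric] by (rule commA)
  have rr: "r*r = r" unfolding r_def
  proof -
    have "p*f*(p*f) = p*(f*p)*f" by (simp add: mult.assoc)
    also have "\<dots> = p*f" using fpc ppx ffx ff by (simp add: mult.assoc)
    finally show "p*f*(p*f) = p*f" .
  qed
  have pr: "p*r = r" unfolding r_def using ppx by simp
  have rp: "r*p = r" unfolding r_def using fpc ppx by (simp add: mult.assoc)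
  have qr: "q*r = r" unfolding r_def using qpf .
  have rq: "r*q = r" unfolding r_def using fp fpc ppx qq by (simp add: mult.assoc)
  have r0: "r = 0" using meet0[OF m1 rA rr le_proj[OF pA rA pp rr pr rp] le_proj[OF qA rA qq rr qr rq]] .
  define r' where "r' = f - p*f"
  have opA: "1 - p \<in> A" using oneA pA by (rule diffA)
  have oqA: "1 - q \<in> A" using oneA qA by (rule diffA)
  have opp: "(1-p)*(1-p) = 1-p" using pp by (simp add: algebra_simps)
  have oqq: "(1-q)*(1-q) = 1-q" using qq by (simp add: algebra_simps)
  have r'A: "r' \<in> A" unfolding r'_def using fA rA[unfolded r_def] by (rule diffA)
  have pf0: "p*f = 0" using r0 unfolding r_def .
  have fp0: "f*p = 0" using pf0 fpc by simp
  have qf0: "q*f = 0" using pf pf0 by simp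
  have fq0: "f*q = 0" using fp fp0 by simp
  have r'f: "r' = f" unfolding r'_def using pf0 by simp
  have "f = 0"
    using meet0[OF m2 fA ff le_proj[OF opA fA opp ff] le_proj[OF oqA fA oqq ff]]
    using pf0 fp0 qf0 fq0 by (simp add: algebra_simps)
  show ?thesis unfolding trivker_def a_def[symmetric]
  proof (intro ballI impI)
    fix b assume b: "b \<in> A" "a*b = 0"
    hence "e*b = 0" using e(3) by blast
    moreover have "e = 1" using \<open>f = 0\<close> unfolding f_def by simp
    ultimately show "b = 0" by simp
  qed
qed


lemma trivker_root: assumes "trivker (a*a)" and "c*c = a*a" shows "trivker c"
  using assms unfolding trivker_def by (metis mult.assoc mult_zero_right)

lemma main_part1:
  assumes pA: "p \<in> A" and pp: "p*p = p" and qA: "q \<in> A" and qq: "q*q = q"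
    and tk1: "trivker (p - (1-q))" and tk2: "trivker (p - q)"
  defines "c \<equiv> psqrt K (p * q * p + (1-p) * (1-q) * (1-p))"
    and "s \<equiv> psqrt K (p * (1-q) * p + (1-p) * q * (1-p))"
    and "u \<equiv> signum A K (p - (1-q))" and "v \<equiv> signum A K (p - q)"
  shows "c \<in> K \<and> s \<in> K \<and> u \<in> A \<and> v \<in> A \<and> u*u = 1 \<and> v*v = 1 \<and> c*c = p * q * p + (1-p) * (1-q) * (1-p)
    \<and> s*s = p * (1-q) * p + (1-p) * q * (1-p) \<and> trivker c \<and> trivker s
    \<and> c*u = p - (1-q) \<and> u*c = p - (1-q) \<and> s*v = p - q \<and> v*s = p - q
    \<and> c*s = s*c \<and> c*p = p*c \<and> s*p = p*s \<and> c*v = v*c \<and> s*u = u*s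
    \<and> u*p = q*u \<and> v*p = v - q*v"
proof -
  define a1 where "a1 = p - (1-q)"
  define a2 where "a2 = p - q"
  have ppx: "p*(p*x) = p*x" for x using pp by (metis mult.assoc)
  have qqx: "q*(q*x) = q*x" for x using qq by (metis mult.assoc)
  have a1A: "a1 \<in> A" unfolding a1_def using pA oneA qA by (intro diffA)
  have a2A: "a2 \<in> A" unfolding a2_def using pA qA by (intro diffA)
  have C2: "p * q * p + (1-p) * (1-q) * (1-p) = a1*a1" unfolding a1_def
    by (simp add: algebra_simps pp qq ppx qqx)
  have S2: "p * (1-q) * p + (1-p) * q * (1-p) = a2*a2" unfolding a2_def
    by (simp add: algebra_simps pp qq ppx qqx)
  have CS: "a1*a1 + a2*a2 = 1" unfolding a1_def a2_def by (simp add: algebra_simps pp qq ppx qqx)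
  have aK1: "a1*a1 \<in> K" using sqK a1A by blast
  have aK2: "a2*a2 \<in> K" using sqK a2A by blast
  note PC = psqrt_props[OF aK1, folded C2, folded c_def]
  note PS = psqrt_props[OF aK2, folded S2, folded s_def]
  have cdef: "c = sabs K a1" unfolding c_def sabs_def C2 ..
  have sdef: "s = sabs K a2" unfolding s_def sabs_def S2 ..
  have udef: "u = signum A K a1" unfolding u_def a1_def ..
  have vdef: "v = signum A K a2" unfolding v_def a2_def ..
  have tk1': "trivker a1" using tk1 unfolding a1_def .
  have tk2': "trivker a2" using tk2 unfolding a2_def .
  note U = signum_props[OF a1A tk1', folded a1_def, folded udef cdef]
  note V = signum_props[OF a2A tk2', folded a2_def, folded vdef sdef]
  have cA: "c \<in> A" using PC(1) KA by blast
  have sA: "s \<in> A" using PS(1) KA by blast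
  have cc: "c*c = a1*a1" using PC(2) C2 by simp
  have ss: "s*s = a2*a2" using PS(2) S2 by simp
  have cC: "\<And>d. d \<in> A \<Longrightarrow> (a1*a1)*d = d*(a1*a1) \<Longrightarrow> c*d = d*c" using PC(3) C2 by simp
  have sC: "\<And>d. d \<in> A \<Longrightarrow> (a2*a2)*d = d*(a2*a2) \<Longrightarrow> s*d = d*s" using PS(3) S2 by simp
  have tkc: "trivker c" using trivker_root[OF trivker_sq[OF a1A tk1'] cc] .
  have tks: "trivker s" using trivker_root[OF trivker_sq[OF a2A tk2'] ss] .
  have a1sq: "a1*a1 = 1 - a2*a2" using CS by (simp add: algebra_simps)
  have a2sq: "a2*a2 = 1 - a1*a1" using CS by (simp add: algebra_simps)
  have pC: "(a1*a1)*p = p*(a1*a1)" unfolding a1_def by (simp add: algebra_simps pp qq ppx qqx)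
  have cp: "c*p = p*c" using cC[OF pA pC] .
  have pS: "(a2*a2)*p = p*(a2*a2)" unfolding a2_def by (simp add: algebra_simps pp qq ppx qqx)
  have sp: "s*p = p*s" using sC[OF pA pS] .
  have a1s: "a1*a1 = 1 - s*s" using a1sq ss by simp
  have "(1 - s*s)*s = s*(1 - s*s)" by (simp add: algebra_simps)
  hence "(a1*a1)*s = s*(a1*a1)" unfolding a1s .
  hence cs: "c*s = s*c" using cC[OF sA] by simp
  have cu: "c*u = a1" and uc: "u*c = a1" using U by auto
  have sv: "s*v = a2" and vs: "v*s = a2" using V by auto
  have uA: "u \<in> A" and vA: "v \<in> A" and uu: "u*u = 1" and vv: "v*v = 1" using U V by auto
  have ua1: "u*a1 = a1*u" using U(3) a1A by blast
  have va2: "v*a2 = a2*v" using V(3) a2A by blast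
  have "(a1*a1)*u = u*(a1*a1)" using ua1 by (metis mult.assoc)
  hence "(1 - a2*a2)*u = u*(1 - a2*a2)" unfolding a1sq .
  hence "(a2*a2)*u = u*(a2*a2)" by (simp add: algebra_simps)
  hence su: "s*u = u*s" using sC[OF uA] by simp
  have "(a2*a2)*v = v*(a2*a2)" using va2 by (metis mult.assoc)
  hence "(1 - a1*a1)*v = v*(1 - a1*a1)" unfolding a2sq .
  hence "(a1*a1)*v = v*(a1*a1)" by (simp add: algebra_simps)
  hence cv: "c*v = v*c" using cC[OF vA] by simp
  have a12: "a1*a2 = -(a2*a1)" unfolding a1_def a2_def by (simp add: algebra_simps pp qq ppx qqx)
  have "(1 - a2*a2)*a2 = a2*(1 - a2*a2)" by (simp add: algebra_simps)
  hence "(a1*a1)*a2 = a2*(a1*a1)" unfolding a1sq .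
  hence ca2: "c*a2 = a2*c" using cC[OF a2A] by simp
  have "(1 - a1*a1)*a1 = a1*(1 - a1*a1)" by (simp add: algebra_simps)
  hence "(a2*a2)*a1 = a1*(a2*a2)" unfolding a2sq .
  hence sa1: "s*a1 = a1*s" using sC[OF a1A] by simp
  have w1A: "u*a2 + a2*u \<in> A" using uA a2A by (rule jordA)
  have "c*(u*a2 + a2*u) = (c*u)*a2 + (c*a2)*u" by (simp add: algebra_simps)
  also have "\<dots> = a1*a2 + a2*(c*u)" using cu ca2 by (simp add: mult.assoc)
  also have "\<dots> = 0" using cu a12 by simp
  finally have "u*a2 + a2*u = 0" using tkc w1A unfolding trivker_def by blast
  hence ua2: "u*a2 = -(a2*u)" by (simp add: add_eq_0_iff)
  have w2A: "v*a1 + a1*v \<in> A" using vA a1A by (rule jordA)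
  have "s*(v*a1 + a1*v) = (s*v)*a1 + (s*a1)*v" by (simp add: algebra_simps)
  also have "\<dots> = a2*a1 + a1*(s*v)" using sv sa1 by (simp add: mult.assoc)
  also have "\<dots> = 0" using sv a12 by simp
  finally have "v*a1 + a1*v = 0" using tks w2A unfolding trivker_def by blast
  hence va1: "v*a1 = -(a1*v)" by (simp add: add_eq_0_iff)
  have "u*(a1+a2) = (a1-a2)*u" using ua1 ua2 by (simp add: algebra_simps)
  moreover have "u*(a1+a2) = u*p + u*p - u" unfolding a1_def a2_def by (simp add: algebra_simps)
  moreover have "(a1-a2)*u = q*u + q*u - u" unfolding a1_def a2_def by (simp add: algebra_simps)
  ultimately have "u*p + u*p = q*u + q*u" by simp
  hence up: "u*p = q*u" by (rule halfeq)
  have "v*(a2+a1) = (a2-a1)*v" using va1 va2 by (simp add: algebra_simps)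
  moreover have "v*(a2+a1) = v*p + v*p - v" unfolding a1_def a2_def by (simp add: algebra_simps)
  moreover have "(a2-a1)*v = (v - q*v) + (v - q*v) - v" unfolding a1_def a2_def by (simp add: algebra_simps)
  ultimately have "v*p + v*p - v = (v - q*v) + (v - q*v) - v" by simp
  hence "v*p + v*p = (v - q*v) + (v - q*v)" by (simp add: algebra_simps)
  hence vp: "v*p = v - q*v" by (rule halfeq)
  show ?thesis using PC(1) PS(1) uA vA uu vv PC(2) PS(2) tkc tks cu uc sv vs cs cp sp cv su up vp
    unfolding a1_def a2_def by blast
qed


lemma comm_left: "(x::'r)*y = y*x \<Longrightarrow> x*(y*z) = y*(x*z)" by (metis mult.assoc)

lemma main_part2:
  assumes pA: "p \<in> A" and pp: "p*p = p" and qA: "q \<in> A" and qq: "q*q = q"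
    and cK: "c \<in> K" and sK: "s \<in> K" and uA: "u \<in> A" and vA: "v \<in> A" and uu: "u*u = 1" and vv: "v*v = 1"
    and cc: "c*c = p * q * p + (1-p) * (1-q) * (1-p)"
    and ss: "s*s = p * (1-q) * p + (1-p) * q * (1-p)" and tkc: "trivker c" and tks: "trivker s"
    and cu: "c*u = p - (1-q)" and uc: "u*c = p - (1-q)" and sv: "s*v = p - q" and vs: "v*s = p - q"
    and cs: "c*s = s*c" and cp: "c*p = p*c" and sp: "s*p = p*s" and cv: "c*v = v*c" and su: "s*u = u*s"
    and up: "u*p = q*u" and vp: "v*p = v - q*v"
  defines "j \<equiv> u*v*p + p*v*u"
  shows "j \<in> A" "j*j = 1" "j*p*j = 1 - p" "c*j = j*c" "s*j = j*s"
    "p * q * (1-p) + (1-p) * q * p = c * s * j"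
proof -
  have ppx: "p*(p*x) = p*x" for x using pp by (metis mult.assoc)
  have qqx: "q*(q*x) = q*x" for x using qq by (metis mult.assoc)
  have uux: "u*(u*x) = x" for x using uu by (metis mult.assoc mult_1_left)
  have vvx: "v*(v*x) = x" for x using vv by (metis mult.assoc mult_1_left)
  have upx: "u*(p*x) = q*(u*x)" for x using up by (metis mult.assoc)
  have "u*p*u = q" using up uu by (simp add: mult.assoc)
  hence "u*q = u*(u*p*u)" by simp
  hence uq: "u*q = p*u" using uux by (simp add: mult.assoc)
  have uqx: "u*(q*x) = p*(u*x)" for x using uq by (metis mult.assoc)
  have vpx: "v*(p*x) = v*x - q*(v*x)" for x using vp by (metis mult.assoc left_diff_distrib)
  have "v*p*v = (v - q*v)*v" using vp by simp
  also have "\<dots> = 1 - q" using vv by (simp add: left_diff_distrib mult.assoc)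
  finally have "v*p*v = 1 - q" .
  hence "v*(v*p*v) = v*(1-q)" by simp
  moreover have "v*(v*p*v) = p*v" using vvx by (simp add: mult.assoc)
  ultimately have "p*v = v - v*q" by (simp add: right_diff_distrib)
  hence vq: "v*q = v - p*v" by (simp add: algebra_simps)
  have vqx: "v*(q*x) = v*x - p*(v*x)" for x using vq by (metis mult.assoc left_diff_distrib)
  have jA: "j \<in> A"
  proof -
    have "(u+p)*v*(u+p) - u*v*u - p*v*p \<in> A" using uA vA pA by (intro diffA tripA addA)
    moreover have "(u+p)*v*(u+p) - u*v*u - p*v*p = j" unfolding j_def by (simp add: algebra_simps)
    ultimately show ?thesis by simp
  qed
  show "j \<in> A" by (rule jA)
  show "j*j = 1" unfolding j_def
    by (simp add: algebra_simps pp qq uu vv ppx qqx uux vvx up vp upx vpx uq vq uqx vqx)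
  show "j*p*j = 1 - p" unfolding j_def
    by (simp add: algebra_simps pp qq uu vv ppx qqx uux vvx up vp upx vpx uq vq uqx vqx)
  have cu': "c*u = u*c" using cu uc by simp
  have sv': "s*v = v*s" using sv vs by simp
  note cl = comm_left[OF cu'] comm_left[OF cv] comm_left[OF cp] comm_left[OF su] comm_left[OF sv'] comm_left[OF sp]
  show "c*j = j*c" unfolding j_def using cu' cv cp cl by (simp add: algebra_simps mult.assoc)
  show "s*j = j*s" unfolding j_def using su sv' sp cl by (simp add: algebra_simps mult.assoc)
  have "c*s*(u*v*p) = (c*u)*(s*v)*p" using su by (simp add: mult.assoc comm_left[OF su])
  also have "\<dots> = (p - (1-q))*(p-q)*p" using cu sv by simp
  finally have e1: "c*s*(u*v*p) = (p - (1-q))*(p-q)*p" .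
  have "c*s*(p*v*u) = p*(s*v)*(c*u)" using cp sp cs cv
    by (simp add: mult.assoc comm_left[OF cp] comm_left[OF sp] comm_left[OF cv] comm_left[OF cs])
  also have "\<dots> = p*(p-q)*(p - (1-q))" using cu sv by simp
  finally have e2: "c*s*(p*v*u) = p*(p-q)*(p - (1-q))" .
  have "c*s*j = (p - (1-q))*(p-q)*p + p*(p-q)*(p - (1-q))" unfolding j_def using e1 e2 by (simp add: distrib_left)
  also have "\<dots> = p * q * (1-p) + (1-p) * q * p" by (simp add: algebra_simps pp qq ppx qqx)
  finally show "p * q * (1-p) + (1-p) * q * p = c * s * j" by simp
qed


lemma main_part3:
  assumes cK: "c \<in> K" and sK: "s \<in> K" and tkc: "trivker c" and tks: "trivker s"
    and jA: "j \<in> A" and jj: "j*j = 1" and cs: "c*s = s*c" and cj: "c*j = j*c" and sj: "s*j = j*s"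
    and kA: "k \<in> A" and kd: "k = c*s*j"
  shows "j \<in> CCset A k"
proof -
  obtain t where tA: "t \<in> A" and tr: "(\<forall>d\<in>A. k*d = d*k \<longrightarrow> t*d = d*t) \<and> sabs K k * t = k \<and> t * sabs K k = k \<and> k*(1 - t*t) = 0"
    using sig_ex[OF kA] by (rule bexE)
  have tC: "\<forall>d\<in>A. k*d = d*k \<longrightarrow> t*d = d*t" and kt: "sabs K k * t = k" using tr by auto
  have cA: "c \<in> A" and sA: "s \<in> A" using cK sK KA by auto
  have "k*k = (c*s)*(c*s)*(j*j)" unfolding kd
    by (simp add: mult.assoc comm_left[OF cj[symmetric]] comm_left[OF sj[symmetric]] cj[symmetric] sj[symmetric])
  hence kk: "k*k = (c*s)*(c*s)" using jj by simp
  have csK: "c*s \<in> K" using pos_prod[OF cK sK cs] .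
  have sabsk: "sabs K k = c*s" unfolding sabs_def kk using psqrt_eq[OF csK] .
  define w where "w = t - j"
  have wA: "w \<in> A" unfolding w_def using tA jA by (rule diffA)
  have "k*s = s*k" unfolding kd using cs sj by (simp add: mult.assoc comm_left[OF sj[symmetric]] sj[symmetric] comm_left[OF cs] cs)
  hence ts: "t*s = s*t" using tC sA by blast
  have sw: "s*w = w*s" unfolding w_def using ts sj by (simp add: algebra_simps)
  have swA: "s*w \<in> A" using sA wA sw by (rule commA)
  have "c*(s*w) = (c*s)*t - c*s*j" unfolding w_def by (simp add: algebra_simps mult.assoc)
  also have "\<dots> = 0" using kt sabsk kd by simp
  finally have "s*w = 0" using tkc swA unfolding trivker_def by blast
  hence "w = 0" using tks wA unfolding trivker_def by blast
  hence tj: "t = j" unfolding w_def by simp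
  show ?thesis unfolding CCset_def Cset_def commutes_def using jA tC tj by auto
qed

end
theorem theorem7p8:
  fixes A K :: "'r::real_algebra_1 set" and p q :: 'r
  assumes SA: "synaptic_algebra A K"
    and pP: "p \<in> projections A" and qP: "q \<in> projections A"
    and g1: "is_proj_meet A K p q 0"
    and g2: "is_proj_meet A K p (orth q) 0"
    and g3: "is_proj_meet A K (orth p) q 0"
    and g4: "is_proj_meet A K (orth p) (orth q) 0"
  defines "c \<equiv> psqrt K (p * q * p + orth p * orth q * orth p)"
    and "s \<equiv> psqrt K (p * orth q * p + orth p * q * orth p)"
    and "j \<equiv> polar_symmetry A K (p - orth q) * polar_symmetry A K (p - q) * p
              + p * polar_symmetry A K (p - q) * polar_symmetry A K (p - orth q)"
  shows "q = c * c * p + c * s * j + s * s * orth p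
    \<and> p * q * p = c * c * p \<and> c * c * p = p * (c * c)
    \<and> orth p * q * orth p = s * s * orth p \<and> s * s * orth p = orth p * (s * s)
    \<and> p * q * orth p + orth p * q * p = c * s * j
    \<and> carrier_of A c = 1 \<and> carrier_of A s = 1
    \<and> j \<in> A \<and> j * j = 1 \<and> j * p * j = orth p
    \<and> commutes c s \<and> commutes c j \<and> commutes s j
    \<and> j \<in> CCset A (p * q * orth p + orth p * q * p)"
proof -
  interpret S: SAlg A K by (rule SAlg.intro[OF SA])
  have pA: "p \<in> A" and pp: "p*p = p" using pP unfolding projections_def by auto
  have qA: "q \<in> A" and qq: "q*q = q" using qP unfolding projections_def by auto
  have ppx: "p*(p*x) = p*x" for x using pp by (metis mult.assoc)
  have qqx: "q*(q*x) = q*x" for x using qq by (metis mult.assoc)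
  have oqA: "1 - q \<in> A" using S.oneA qA by (rule S.diffA)
  have oqq: "(1-q)*(1-q) = 1-q" using qq by (simp add: algebra_simps)
  have tk2: "S.trivker (p - q)"
    using S.generic_trivker[OF pA pp qA qq g1] g4 unfolding orth_def by simp
  have tk1: "S.trivker (p - (1-q))"
    using S.generic_trivker[OF pA pp oqA oqq] g2 g3 unfolding orth_def by simp
  have a1A: "p - (1-q) \<in> A" using pA oqA by (rule S.diffA)
  have a2A: "p - q \<in> A" using pA qA by (rule S.diffA)
  have ps1: "polar_symmetry A K (p - orth q) = signum A K (p - (1-q))"
    using S.signum_props(6)[OF a1A tk1] unfolding orth_def .
  have ps2: "polar_symmetry A K (p - q) = signum A K (p - q)"
    using S.signum_props(6)[OF a2A tk2] .
  have cdef: "c = psqrt K (p * q * p + (1-p) * (1-q) * (1-p))" unfolding c_def orth_def ..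
  have sdef: "s = psqrt K (p * (1-q) * p + (1-p) * q * (1-p))" unfolding s_def orth_def ..
  define u where "u = signum A K (p - (1-q))"
  define v where "v = signum A K (p - q)"
  have jdef: "j = u*v*p + p*v*u" unfolding j_def ps1 ps2 u_def v_def ..
  note P1 = S.main_part1[OF pA pp qA qq tk1 tk2, folded cdef sdef u_def v_def]
  have cK: "c \<in> K" and sK: "s \<in> K" and uA: "u \<in> A" and vA: "v \<in> A" and uu: "u*u = 1" and vv: "v*v = 1"
    and cc: "c*c = p * q * p + (1-p) * (1-q) * (1-p)"
    and ss: "s*s = p * (1-q) * p + (1-p) * q * (1-p)" and tkc: "S.trivker c" and tks: "S.trivker s"
    and cu: "c*u = p - (1-q)" and uc: "u*c = p - (1-q)" and sv: "s*v = p - q" and vs: "v*s = p - q"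
    and cs: "c*s = s*c" and cp: "c*p = p*c" and sp: "s*p = p*s" and cv: "c*v = v*c" and su: "s*u = u*s"
    and up: "u*p = q*u" and vp: "v*p = v - q*v" using P1 by auto
  note P2 = S.main_part2[OF pA pp qA qq cK sK uA vA uu vv cc ss tkc tks cu uc sv vs cs cp sp cv su up vp, folded jdef]
  have cA: "c \<in> A" and sA: "s \<in> A" using cK sK S.KA by auto
  have kA: "p * q * (1-p) + (1-p) * q * p \<in> A"
  proof -
    have op: "1 - p \<in> A" using S.oneA pA by (rule S.diffA)
    have "(p + (1-p))*q*(p + (1-p)) - p*q*p - (1-p)*q*(1-p) \<in> A"
      using pA qA op S.oneA by (intro S.diffA S.tripA S.addA)
    moreover have "(p + (1-p))*q*(p + (1-p)) - p*q*p - (1-p)*q*(1-p) = p * q * (1-p) + (1-p) * q * p"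
      by (simp add: algebra_simps)
    ultimately show ?thesis by simp
  qed
  have cj: "c*j = j*c" and sj: "s*j = j*s" using P2 by auto
  have CC: "j \<in> CCset A (p * q * (1-p) + (1-p) * q * p)"
    using S.main_part3[OF cK sK tkc tks P2(1) P2(2) cs cj sj kA P2(6)] .
  have ccp: "c*c*p = p*q*p" unfolding cc by (simp add: algebra_simps pp qq ppx qqx)
  have pcc: "p*(c*c) = p*q*p" unfolding cc by (simp add: algebra_simps pp qq ppx qqx)
  have ssp: "s*s*(1-p) = (1-p)*q*(1-p)" unfolding ss by (simp add: algebra_simps pp qq ppx qqx)
  have pss: "(1-p)*(s*s) = (1-p)*q*(1-p)" unfolding ss by (simp add: algebra_simps pp qq ppx qqx)
  have qdec: "q = p*q*p + (p * q * (1-p) + (1-p) * q * p) + (1-p)*q*(1-p)"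
    by (simp add: algebra_simps pp qq ppx qqx)
  have car_c: "carrier_of A c = 1" using S.carrier_one[OF cA tkc] .
  have car_s: "carrier_of A s = 1" using S.carrier_one[OF sA tks] .
  show ?thesis unfolding orth_def commutes_def
    using qdec ccp pcc ssp pss P2 car_c car_s CC cs cj sj
    by (simp add: add.assoc)
qed

end
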